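(* Let $m \geq 2$ be an integer. Let $P_m(z) \in \mathbb{Z}[[z]]$ be the unique formal power series with constant term $1$ satisfying $$P_m = 1 + z\,(P_m)^{(m-1)^2}.$$ Define the integers $\alpha_n$ ($n \geq 1$) by the formal product factorization $$P_m(z) = \prod_{n=1}^{\infty} \bigl(1 - (-1)^{mn} z^n\bigr)^{\alpha_n},$$ and set $\Omega(n\gamma_c) := \dfrac{m\,\alpha_n}{n}$. Then for every $n \geq 1$, $$\Omega(n \gamma_{c}) = \frac{m}{(m-1)^2 n^2}\sum_{d\mid n} (-1)^{m d + 1}\, \mu\!\left(\frac{n}{d} \right) \binom{(m-1)^2 d}{d},$$ where $\mu$ is the Möbius function.
   Context: In the paper, $\Omega(n\gamma_c)$ denotes the BPS index (second helicity supertrace) of the charge $n\gamma_c$ for a four-dimensional $\mathcal{N}=2$ theory whose spectral network at the critical phase is an "$m$-herd"; the paper shows that the street factor generating function $P_m$ of such a network satisfies the displayed algebraic equation and that $\Omega(n\gamma_c) = m\alpha_n/n$ with $\alpha_n$ the exponents of the displayed factorization. The product factorization is a formal one: the exponents $\alpha_n$ are uniquely determined by comparing coefficients of $\log P_m$ order by order in $z$. *)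

theory Defs
  imports "HOL-Computational_Algebra.Computational_Algebra"
begin

definition mobius :: "nat \<Rightarrow> int" where
  "mobius n = (if squarefree n then (-1) ^ card (prime_factors n) else 0)"

definition fps_ipow :: "rat fps \<Rightarrow> int \<Rightarrow> rat fps" where
  "fps_ipow f k = (if 0 \<le> k then f ^ nat k else (inverse f) ^ nat (- k))"

text \<open>The formal infinite product factorisation
  P = prod_{n>=1} (1 - (-1)^(m n) z^n)^(alpha n), stated coefficientwise:
  the coefficient of z^N only depends on the factors with n \<le> N.\<close>
definition herd_factorization :: "nat \<Rightarrow> rat fps \<Rightarrow> (nat \<Rightarrow> int) \<Rightarrow> bool" where
  "herd_factorization m P \<alpha> \<longleftrightarrow>
     (\<forall>N. fps_nth P N =
        fps_nth (\<Prod>n\<in>{1..N}. fps_ipow (1 - of_int ((-1) ^ (m * n)) * fps_X ^ n) (\<alpha> n)) N)"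

end

theory Submission
  imports Defs
begin


lemma mobius_1: "mobius 1 = 1" by (simp add: mobius_def)

lemma mobius_prime_mult:
  assumes p: "prime p" and nd: "\<not> p dvd d" and d: "d > 0"
  shows "mobius (p * d) = - mobius d"
proof -
  have cop: "coprime p d" using p nd by (simp add: prime_imp_coprime)
  have sq: "squarefree (p*d) \<longleftrightarrow> squarefree d"
    using squarefree_mult_coprime[OF cop] squarefree_prime[OF p]
    by (metis dvd_triv_right squarefree_mono)
  have pf: "prime_factors (p*d) = insert p (prime_factors d)"
    using prime_factors_product[of p d] p d prime_prime_factors[OF p] by auto
  have "p \<notin> prime_factors d" using nd by auto
  then have "card (prime_factors (p*d)) = Suc (card (prime_factors d))"
    unfolding pf by simp
  then show ?thesis using sq by (simp add: mobius_def)
qed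

lemma mobius_sq:
  assumes p: "prime p" and "p^2 dvd d"
  shows "mobius d = 0"
proof -
  have "\<not> squarefree d" using assms unfolding squarefree_def
    by (metis not_prime_unit)
  then show ?thesis by (simp add: mobius_def)
qed

lemma sum_mobius:
  assumes n: "n > (1::nat)"
  shows "(\<Sum>d | d dvd n. mobius d) = 0"
proof -
  obtain p where p: "prime p" "p dvd n" using n prime_factor_nat[of n] by auto
  define D where "D = {d. d dvd n}"
  have finD: "finite D" unfolding D_def using n by simp
  define A where "A = {d\<in>D. \<not> p dvd d}"
  define B where "B = {d\<in>D. p dvd d \<and> \<not> p^2 dvd d}"
  define C where "C = {d\<in>D. p^2 dvd d}"
  have DABC: "D = A \<union> (B \<union> C)" unfolding A_def B_def C_def by auto
  have sD: "sum mobius D = sum mobius A + (sum mobius B + sum mobius C)"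
  proof -
    have fA: "finite A" "finite B" "finite C" using finD by (auto simp: A_def B_def C_def)
    have d: "A \<inter> (B \<union> C) = {}" "B \<inter> C = {}" by (auto simp: A_def B_def C_def)
    show ?thesis unfolding DABC
      using sum.union_disjoint[OF fA(1) finite_UnI[OF fA(2,3)] d(1), of mobius]
        sum.union_disjoint[OF fA(2,3) d(2), of mobius] by simp
  qed
  have sC: "sum mobius C = 0" using mobius_sq[OF p(1)] by (simp add: C_def)
  have sB: "sum mobius B = sum (\<lambda>d. mobius (p*d)) A"
  proof (rule sum.reindex_bij_witness[where i = "\<lambda>d. p*d" and j = "\<lambda>d. d div p"])
    fix a assume a: "a \<in> B"
    then show "p * (a div p) = a" by (simp add: B_def)
    show "a div p \<in> A"
    proof -
      have a1: "a dvd n" "p dvd a" "\<not> p^2 dvd a" using a by (auto simp: B_def D_def)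
      have "a div p dvd a" using a1(2) by (metis dvd_mult_div_cancel dvd_triv_right)
      then have "a div p dvd n" using a1 dvd_trans by blast
      moreover have "\<not> p dvd a div p"
      proof
        assume "p dvd a div p"
        then have "p * p dvd p * (a div p)" by simp
        then show False using a1 by (simp add: power2_eq_square)
      qed
      ultimately show ?thesis by (simp add: A_def D_def)
    qed
  next
    fix a assume a: "a \<in> A"
    then show "p * a div p = a" using p by (simp add: prime_gt_0_nat)
    have "coprime p a" using a p by (simp add: A_def prime_imp_coprime)
    then have "p * a dvd n" using a p by (auto simp: A_def D_def divides_mult)
    then show "p * a \<in> B" using a p by (auto simp: A_def B_def D_def power2_eq_square prime_gt_0_nat)
  qed (auto simp: B_def)
  have "sum (\<lambda>d. mobius (p*d)) A = - sum mobius A"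
    unfolding sum_negf[symmetric]
  proof (rule sum.cong)
    fix x assume "x \<in> A"
    then have "\<not> p dvd x" "x dvd n" by (auto simp: A_def D_def)
    moreover have "x > 0" using \<open>x dvd n\<close> n by (metis dvd_0_left_iff gr0I not_one_less_zero)
    ultimately show "mobius (p*x) = - mobius x" by (intro mobius_prime_mult p)
  qed simp
  then show ?thesis using sD sB sC by (simp add: D_def)
qed

lemma sum_mobius_if:
  assumes "M > (0::nat)"
  shows "(\<Sum>d | d dvd M. of_int (mobius d) :: rat) = (if M = 1 then 1 else 0)"
proof (cases "M = 1")
  case True then show ?thesis using mobius_1 by simp
next
  case False
  then have "M > 1" using assms by simp
  from sum_mobius[OF this] show ?thesis using False by (metis of_int_0 of_int_sum)
qed

lemma mobius_inversion:
  fixes g F :: "nat \<Rightarrow> rat"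
  assumes h: "\<And>N. N \<ge> 1 \<Longrightarrow> (\<Sum>e | e dvd N. g e) = F N" and N: "N \<ge> 1"
  shows "g N = (\<Sum>d | d dvd N. of_int (mobius (N div d)) * F d)"
proof -
  define D where "D = {d. d dvd N}"
  have finD: "finite D" unfolding D_def using N by simp
  have "(\<Sum>d | d dvd N. of_int (mobius (N div d)) * F d)
      = (\<Sum>d\<in>D. \<Sum>e\<in>{e. e \<in> D \<and> e dvd d}. of_int (mobius (N div d)) * g e)"
  proof (rule sum.cong)
    fix d assume d: "d \<in> D"
    then have "d \<ge> 1" unfolding D_def using N by (metis dvd_0_left_iff less_one mem_Collect_eq not_less one_neq_zero le_zero_eq)
    then have "F d = (\<Sum>e | e dvd d. g e)" using h by simp
    also have "{e. e dvd d} = {e. e \<in> D \<and> e dvd d}" using d by (auto simp: D_def intro: dvd_trans)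
    finally show "of_int (mobius (N div d)) * F d = (\<Sum>e\<in>{e. e \<in> D \<and> e dvd d}. of_int (mobius (N div d)) * g e)"
      by (simp add: sum_distrib_left)
  qed (simp add: D_def)
  also have "\<dots> = (\<Sum>e\<in>D. \<Sum>d\<in>{d. d \<in> D \<and> e dvd d}. of_int (mobius (N div d)) * g e)"
    by (rule sum.swap_restrict[OF finD finD])
  also have "\<dots> = (\<Sum>e\<in>D. g e * (if N div e = 1 then 1 else 0))"
  proof (rule sum.cong)
    fix e assume e: "e \<in> D"
    then obtain c where c: "N = e * c" by (auto simp: D_def)
    have cpos: "c > 0" "e > 0" using c N by auto
    have "(\<Sum>d\<in>{d. d \<in> D \<and> e dvd d}. of_int (mobius (N div d)) :: rat) = (\<Sum>t | t dvd c. of_int (mobius t))"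
    proof (rule sum.reindex_bij_witness[where i = "\<lambda>t. N div t" and j = "\<lambda>d. N div d"])
      fix d assume d: "d \<in> {d. d \<in> D \<and> e dvd d}"
      then obtain b where b: "d = e * b" by auto
      from d obtain a where a: "N = d * a" by (auto simp: D_def)
      have "c = b * a" using a b c cpos by (simp add: mult.assoc)
      then show "N div d \<in> {t. t dvd c}" using a b cpos by auto
      show "N div (N div d) = d" using a cpos by (auto simp: c)
    next
      fix t assume t: "t \<in> {t. t dvd c}"
      then obtain a where a: "c = t * a" by auto
      have tp: "t > 0" using a cpos by (auto intro: gr0I)
      have "N div t = e * a" using a c tp by simp
      then show "N div t \<in> {d. d \<in> D \<and> e dvd d}" using a c by (auto simp: D_def)
      show "N div (N div t) = t" using a c tp \<open>N div t = e * a\<close> cpos by simp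
    qed simp
    also have "\<dots> = (if c = 1 then 1 else 0)" using sum_mobius_if[OF cpos(1)] .
    also have "c = N div e" using c cpos by simp
    finally show "(\<Sum>d\<in>{d. d \<in> D \<and> e dvd d}. of_int (mobius (N div d)) * g e) = g e * (if N div e = 1 then 1 else 0)"
      by (simp add: sum_distrib_right[symmetric] del: One_nat_def)
  qed simp
  also have "\<dots> = (\<Sum>e\<in>D. if e = N then g e else 0)"
  proof (rule sum.cong)
    fix e assume "e \<in> D"
    then have "N div e = 1 \<longleftrightarrow> e = N" using N by (auto simp: D_def elim!: dvdE)
    then show "g e * (if N div e = 1 then 1 else 0) = (if e = N then g e else 0)" by simp
  qed simp
  also have "\<dots> = g N" using finD by (simp add: D_def)
  finally show ?thesis ..
qed



lemma comb_id:
  fixes a N K :: nat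
  assumes N: "N \<ge> 1"
  shows "(\<Sum>j\<in>{1..N}. j * (a choose j) * (K choose (N - j))) = a * ((K + a - 1) choose (N - 1))"
proof -
  have "(\<Sum>j\<in>{1..N}. j * (a choose j) * (K choose (N - j)))
      = (\<Sum>j\<in>{1..N}. a * (((a - 1) choose (j - 1)) * (K choose (N - j))))"
    by (rule sum.cong) (auto simp: times_binomial_minus1_eq)
  also have "\<dots> = a * (\<Sum>j\<in>{1..N}. ((a - 1) choose (j - 1)) * (K choose (N - j)))"
    by (simp add: sum_distrib_left)
  also have "(\<Sum>j\<in>{1..N}. ((a - 1) choose (j - 1)) * (K choose (N - j)))
      = (\<Sum>i\<le>N-1. ((a - 1) choose i) * (K choose (N - 1 - i)))"
  proof -
    obtain N' where N': "N = Suc N'" using N by (cases N) auto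
    show ?thesis unfolding N' using sum.shift_bounds_cl_Suc_ivl[of "\<lambda>j. ((a - 1) choose (j - 1)) * (K choose (Suc N' - j))" 0 N']
      by (simp add: atMost_atLeast0)
  qed
  also have "\<dots> = (a - 1 + K) choose (N - 1)" by (rule vandermonde)
  finally show ?thesis by (cases a) (simp_all add: add.commute)
qed

lemma alg_aux:
  fixes c X D P Q R :: "'a::comm_ring_1"
  assumes "X * R = P - 1" "Q * P = R"
  shows "(c * (X * D) + P - X * (X * (c * D * Q) + R) - 1) * P = c * (X * D)"
proof -
  have "(c * (X * D) + P - X * (X * (c * D * Q) + R) - 1) * P
      = c * (X * D) * P + P * P - c * X * D * (X * (Q * P)) - (X * R) * P - P"
    by (simp add: algebra_simps)
  also have "\<dots> = c * (X * D)" unfolding assms by (simp add: algebra_simps)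
  finally show ?thesis .
qed

locale lag =
  fixes k :: nat and P :: "rat fps"
  assumes k: "k \<ge> 1" and P0: "P $ 0 = 1" and Peq: "P = 1 + fps_X * P ^ k"
begin

lemma Ppow0 [simp]: "(P ^ n) $ 0 = 1"
  by (simp add: fps_nth_power_0 P0)

lemma coef_pow:
  "N \<ge> 1 \<Longrightarrow> (P ^ a) $ N = of_nat a / of_nat N * of_nat ((k * N + a - 1) choose (N - 1))"
proof (induction N arbitrary: a rule: less_induct)
  case (less N)
  have exp: "P ^ a = (\<Sum>j\<le>a. of_nat (a choose j) * (fps_X ^ j * P ^ (k * j)))"
  proof -
    have "P ^ a = (fps_X * P ^ k + 1) ^ a" using Peq by (simp add: add.commute)
    also have "\<dots> = (\<Sum>j\<le>a. of_nat (a choose j) * (fps_X * P ^ k) ^ j * 1 ^ (a - j))"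
      by (rule binomial_ring)
    finally show ?thesis by (simp add: power_mult_distrib power_mult mult.assoc)
  qed
  define g where "g j = (of_nat (j * (a choose j) * (k * N choose (N - j))) :: rat) / of_nat N" for j
  have trm: "of_nat (a choose j) * (fps_X ^ j * P ^ (k * j)) $ N = (if j \<in> {1..N} then g j else 0)" for j
  proof -
    consider "j = 0" | "j > N" | "j = N" | "1 \<le> j \<and> j < N" by linarith
    then show ?thesis
    proof cases
      case 1 then show ?thesis using less.prems by simp
    next
      case 2 then show ?thesis by (simp add: fps_X_power_mult_nth)
    next
      case 3 then show ?thesis using less.prems by (simp add: fps_X_power_mult_nth g_def)
    next
      case 4
      then have jN: "1 \<le> j" "j < N" by auto
      have IH: "(P ^ (k * j)) $ (N - j) = of_nat (k*j) / of_nat (N - j) * of_nat ((k * (N - j) + k * j - 1) choose (N - j - 1))"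
        using less.IH[of "N - j" "k * j"] jN by simp
      have e1: "k * (N - j) + k * j = k * N" using jN by (simp add: diff_mult_distrib2)
      have e2: "(N - j) * (k * N choose (N - j)) = k * N * ((k * N - 1) choose (N - j - 1))"
        using times_binomial_minus1_eq[of "N - j" "k * N"] jN by simp
      have e2': "(of_nat (N - j) :: rat) * of_nat (k * N choose (N - j)) = of_nat (k * N) * of_nat ((k * N - 1) choose (N - j - 1))"
        using arg_cong[OF e2, of "of_nat :: nat \<Rightarrow> rat"] by simp
      have pos: "(of_nat (N - j) :: rat) \<noteq> 0" "(of_nat N :: rat) \<noteq> 0" "(of_nat k :: rat) \<noteq> 0" using jN k by auto
      have "of_nat (a choose j) * (fps_X ^ j * P ^ (k * j)) $ N = of_nat (a choose j) * (P ^ (k * j)) $ (N - j)"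
        using jN by (simp add: fps_X_power_mult_nth)
      also have "\<dots> = g j"
        unfolding IH e1 g_def using pos e2'
        by (simp add: field_simps)
      finally show ?thesis using jN by simp
    qed
  qed
  have "(P ^ a) $ N = (\<Sum>j\<le>a. if j \<in> {1..N} then g j else 0)"
    unfolding exp fps_sum_nth by (simp add: trm)
  also have "\<dots> = sum g ({..a} \<inter> {1..N})" by (rule sum.inter_restrict[symmetric]) simp
  also have "\<dots> = sum g {1..N}"
    by (rule sum.mono_neutral_left) (auto simp: g_def)
  also have "\<dots> = (\<Sum>j\<in>{1..N}. of_nat (j * (a choose j) * (k * N choose (N - j)))) / of_nat N"
    unfolding g_def by (simp add: sum_divide_distrib)
  also have "\<dots> = of_nat (a * ((k * N + a - 1) choose (N - 1))) / of_nat N"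
    unfolding of_nat_sum[symmetric] comb_id[OF less.prems] ..
  finally show ?case by simp
qed

lemma Xderiv_nth: "(fps_X * fps_deriv f) $ N = of_nat N * (f $ N :: rat)"
  by (cases N) (simp_all add: fps_X_mult_nth)

definition Bs :: "nat \<Rightarrow> rat fps" where
  "Bs a = Abs_fps (\<lambda>N. of_nat ((k * N + a) choose N))"

lemma Bs_eq:
  assumes a: "a \<ge> 1"
  shows "fps_const (of_nat a) * Bs a = fps_const (of_nat k) * (fps_X * fps_deriv (P ^ a)) + fps_const (of_nat a) * P ^ a"
proof (rule fps_ext)
  fix N
  show "(fps_const (of_nat a) * Bs a) $ N = (fps_const (of_nat k) * (fps_X * fps_deriv (P ^ a)) + fps_const (of_nat a) * P ^ a) $ N"
  proof (cases "N = 0")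
    case True then show ?thesis by (simp add: Bs_def Xderiv_nth)
  next
    case False
    then have N: "N \<ge> 1" by simp
    have e: "N * ((k * N + a) choose N) = (k * N + a) * ((k * N + a - 1) choose (N - 1))"
      using times_binomial_minus1_eq[of N "k * N + a"] N by simp
    have e': "(of_nat N :: rat) * of_nat ((k * N + a) choose N) = (of_nat k * of_nat N + of_nat a) * of_nat ((k * N + a - 1) choose (N - 1))"
      using arg_cong[OF e, of "of_nat :: nat \<Rightarrow> rat"] by simp
    have Nz: "(of_nat N :: rat) \<noteq> 0" using N by simp
    define B where "B = (of_nat ((k * N + a - 1) choose (N - 1)) :: rat)"
    have "of_nat k * (of_nat N * (of_nat a / of_nat N * B)) + of_nat a * (of_nat a / of_nat N * B)
        = of_nat a / of_nat N * ((of_nat k * of_nat N + of_nat a) * B)"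
      by (simp add: field_simps)
    also have "\<dots> = of_nat a / of_nat N * (of_nat N * of_nat ((k * N + a) choose N))"
      using e' by (simp add: B_def)
    also have "\<dots> = of_nat a * of_nat ((k * N + a) choose N)" using Nz by simp
    finally have fin: "of_nat k * (of_nat N * (of_nat a / of_nat N * B)) + of_nat a * (of_nat a / of_nat N * B) = of_nat a * of_nat ((k * N + a) choose N)" .
    have l: "(fps_const (of_nat a) * Bs a) $ N = of_nat a * of_nat ((k * N + a) choose N)"
      by (simp add: Bs_def)
    have r: "(fps_const (of_nat k) * (fps_X * fps_deriv (P ^ a)) + fps_const (of_nat a) * P ^ a) $ N
       = of_nat k * (of_nat N * (of_nat a / of_nat N * B)) + of_nat a * (of_nat a / of_nat N * B)"
      by (simp only: fps_add_nth fps_mult_left_const_nth Xderiv_nth coef_pow[OF N] B_def)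
    show ?thesis unfolding l r fin ..
  qed
qed

lemma Bs0: "Bs 0 = Bs 1 - fps_X * Bs k"
proof (rule fps_ext)
  fix N
  show "Bs 0 $ N = (Bs 1 - fps_X * Bs k) $ N"
  proof (cases N)
    case 0 then show ?thesis by (simp add: Bs_def)
  next
    case (Suc M)
    have "k * M + k = k * N - 0" "k * N = k * M + k" using Suc by simp_all
    then show ?thesis using Suc by (simp add: Bs_def fps_X_mult_nth add.commute)
  qed
qed

lemma fps_const_cancel:
  assumes "c \<noteq> (0::rat)" "fps_const c * f = fps_const c * g"
  shows "f = g"
proof (rule fps_ext)
  fix n
  from arg_cong[OF assms(2), of "\<lambda>h. h $ n"] assms(1) show "f $ n = g $ n" by simp
qed

definition G :: "rat fps" where "G = fps_const (1 / of_nat k) * (Bs 0 - 1)"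

lemma G_nth: "N \<ge> 1 \<Longrightarrow> G $ N = of_nat ((k * N) choose N) / of_nat k"
  by (simp add: G_def Bs_def)

lemma G_P: "G * P = fps_X * fps_deriv P"
proof -
  define c where "c = fps_const (of_nat k :: rat)"
  have h1: "Bs 1 = c * (fps_X * fps_deriv P) + P"
    using Bs_eq[of 1] by (simp add: c_def)
  have "c * Bs k = c * (fps_X * fps_deriv (P ^ k)) + c * P ^ k"
    using Bs_eq[of k] k by (simp add: c_def)
  then have eqk: "c * Bs k = c * (fps_X * (c * fps_deriv P * P ^ (k - 1)) + P ^ k)"
    by (simp add: c_def fps_deriv_power algebra_simps fps_of_nat)
  have h2: "Bs k = fps_X * (c * fps_deriv P * P ^ (k - 1)) + P ^ k"
    unfolding c_def by (rule fps_const_cancel[OF _ eqk[unfolded c_def]]) (use k in simp)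
  have h4: "fps_X * P ^ k = P - 1" using Peq by (metis add_diff_cancel_left')
  have h5: "P ^ (k - 1) * P = P ^ k" using k by (simp add: power_Suc2[symmetric])
  have "(Bs 0 - 1) * P = c * (fps_X * fps_deriv P)"
    unfolding Bs0 h1 h2 using alg_aux[OF h4 h5] .
  moreover have "fps_const (1 / of_nat k) * c = (1 :: rat fps)" using k by (simp add: c_def)
  ultimately show ?thesis unfolding G_def
    by (metis mult.assoc mult_1)
qed

end


definition lowz :: "nat \<Rightarrow> rat fps \<Rightarrow> bool" where
  "lowz j F \<longleftrightarrow> F $ 0 = 1 \<and> (\<forall>i. 0 < i \<and> i \<le> j \<longrightarrow> F $ i = 0)"

lemma mult_lowz_right:
  assumes "lowz j B" "i \<le> j"
  shows "(A * B) $ i = A $ i"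
proof -
  have "(A * B) $ i = (\<Sum>t=0..i. if t = i then A $ i else 0)"
    unfolding fps_mult_nth
  proof (rule sum.cong)
    fix t assume t: "t \<in> {0..i}"
    show "A $ t * B $ (i - t) = (if t = i then A $ i else 0)"
      using assms t by (auto simp: lowz_def)
  qed simp
  also have "\<dots> = A $ i" by simp
  finally show ?thesis .
qed

lemma mult_lowz_Suc:
  assumes "lowz j B"
  shows "(A * B) $ Suc j = A $ Suc j + A $ 0 * B $ Suc j"
proof -
  have "(A * B) $ Suc j = (\<Sum>t=0..Suc j. (if t = Suc j then A $ Suc j else 0) + (if t = 0 then A $ 0 * B $ Suc j else 0))"
    unfolding fps_mult_nth
  proof (rule sum.cong)
    fix t assume t: "t \<in> {0..Suc j}"
    show "A $ t * B $ (Suc j - t) = (if t = Suc j then A $ Suc j else 0) + (if t = 0 then A $ 0 * B $ Suc j else 0)"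
      using assms t by (auto simp: lowz_def)
  qed simp
  also have "\<dots> = A $ Suc j + A $ 0 * B $ Suc j" by (simp add: sum.distrib)
  finally show ?thesis .
qed

lemma lowz_mult:
  assumes "lowz j A" "lowz j B"
  shows "lowz j (A * B)" "(A * B) $ Suc j = A $ Suc j + B $ Suc j"
proof -
  show "lowz j (A * B)"
    using assms mult_lowz_right[OF assms(2)] unfolding lowz_def by auto
  show "(A * B) $ Suc j = A $ Suc j + B $ Suc j"
    using mult_lowz_Suc[OF assms(2)] assms(1) by (simp add: lowz_def)
qed

lemma lowz_power:
  assumes "lowz j A"
  shows "lowz j (A ^ p) \<and> (A ^ p) $ Suc j = of_nat p * A $ Suc j"
proof (induction p)
  case 0 then show ?case by (simp add: lowz_def)
next
  case (Suc p)
  then show ?case using lowz_mult[OF assms, of "A ^ p"] lowz_mult[OF _ assms, of "A ^ p"]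
    by (simp add: algebra_simps)
qed

lemma lowz_mono: "lowz j A \<Longrightarrow> i \<le> j \<Longrightarrow> lowz i A"
  by (auto simp: lowz_def)

lemma lowz_prod: "finite S \<Longrightarrow> (\<And>n. n \<in> S \<Longrightarrow> lowz j (F n)) \<Longrightarrow> lowz j (\<Prod>n\<in>S. F n)"
proof (induction S rule: finite_induct)
  case empty then show ?case by (simp add: lowz_def)
next
  case (insert x S) then show ?case using lowz_mult(1) by simp
qed

definition fac :: "rat \<Rightarrow> nat \<Rightarrow> rat fps" where
  "fac c n = 1 - fps_const c * fps_X ^ n"

definition Einv :: "rat \<Rightarrow> nat \<Rightarrow> rat fps" where
  "Einv c n = Abs_fps (\<lambda>j. if n dvd j then c ^ (j div n) else 0)"

lemma fac_Einv:
  assumes n: "n \<ge> 1"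
  shows "fac c n * Einv c n = 1"
proof (rule fps_ext)
  fix j
  have "(fps_const c * fps_X ^ n * Einv c n) $ j = c * (if j < n then 0 else Einv c n $ (j - n))"
    by (simp add: mult.assoc fps_X_power_mult_nth)
  moreover have "Einv c n $ j - c * (if j < n then 0 else Einv c n $ (j - n)) = (1 :: rat fps) $ j"
  proof (cases "j < n")
    case True then show ?thesis using n by (cases "j = 0") (auto simp: Einv_def dest: dvd_imp_le)
  next
    case False
    then have jn: "j \<ge> n" by simp
    have dv: "n dvd (j - n) \<longleftrightarrow> n dvd j" using jn by (simp add: dvd_minus_self)
    show ?thesis
    proof (cases "n dvd j")
      case True
      then obtain q where q: "j = n * q" by auto
      then have "q \<ge> 1" using jn n by (cases q) auto
      then have "(j - n) div n = q - 1" "j div n = q" using q n by (simp_all add: diff_mult_distrib2[symmetric, of n q 1, simplified])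
      then show ?thesis using True dv jn n \<open>q \<ge> 1\<close> by (simp add: Einv_def power_eq_if)
    next
      case False then show ?thesis using dv jn n by (simp add: Einv_def)
    qed
  qed
  ultimately show "(fac c n * Einv c n) $ j = (1 :: rat fps) $ j"
    by (simp add: fac_def algebra_simps fps_X_power_mult_nth)
qed

lemma inverse_fac: "n \<ge> 1 \<Longrightarrow> inverse (fac c n) = Einv c n"
  by (rule fps_inverse_unique[OF fac_Einv])

lemma lowz_fac: "n \<ge> 1 \<Longrightarrow> lowz (n - 1) (fac c n) \<and> fac c n $ n = - c"
  by (auto simp: lowz_def fac_def)

lemma lowz_Einv: "n \<ge> 1 \<Longrightarrow> lowz (n - 1) (Einv c n) \<and> Einv c n $ n = c"
  by (auto simp: lowz_def Einv_def dest: dvd_imp_le)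

lemma lowz_ipow:
  assumes n: "n \<ge> 1"
  shows "lowz (n - 1) (fps_ipow (fac c n) a) \<and> fps_ipow (fac c n) a $ n = - of_int a * c"
proof (cases "0 \<le> a")
  case True
  have "Suc (n - 1) = n" using n by simp
  then show ?thesis using True lowz_power[of "n - 1" "fac c n" "nat a"] lowz_fac[OF n]
    by (simp add: fps_ipow_def)
next
  case False
  have "Suc (n - 1) = n" using n by simp
  then show ?thesis using False lowz_power[of "n - 1" "Einv c n" "nat (- a)"] lowz_Einv[OF n]
    by (simp add: fps_ipow_def inverse_fac[OF n])
qed

definition Ld :: "rat fps \<Rightarrow> rat fps \<Rightarrow> bool" where
  "Ld F L \<longleftrightarrow> fps_X * fps_deriv F = L * F"

lemma Ld_mult: "Ld A LA \<Longrightarrow> Ld B LB \<Longrightarrow> Ld (A * B) (LA + LB)"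
  unfolding Ld_def by (simp add: algebra_simps)

lemma Ld_one: "Ld 1 0" by (simp add: Ld_def)

lemma Ld_power: "Ld A L \<Longrightarrow> Ld (A ^ p) (of_nat p * L)"
proof (induction p)
  case 0 then show ?case using Ld_one by simp
next
  case (Suc p)
  from Ld_mult[OF Suc.prems Suc.IH[OF Suc.prems]] show ?case by (simp add: algebra_simps)
qed

lemma Ld_prod: "finite S \<Longrightarrow> (\<And>n. n \<in> S \<Longrightarrow> Ld (F n) (L n)) \<Longrightarrow> Ld (\<Prod>n\<in>S. F n) (\<Sum>n\<in>S. L n)"
proof (induction S rule: finite_induct)
  case empty then show ?case using Ld_one by simp
next
  case (insert x S) then show ?case using Ld_mult by simp
qed

definition Lf :: "rat \<Rightarrow> nat \<Rightarrow> rat fps" where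
  "Lf c n = - (fps_const (of_nat n * c) * fps_X ^ n * Einv c n)"

lemma Ld_fac:
  assumes n: "n \<ge> 1"
  shows "Ld (fac c n) (Lf c n)"
proof -
  have X: "fps_X * fps_X ^ (n - 1) = (fps_X ^ n :: rat fps)" using n by (simp add: power_Suc[symmetric])
  have "fps_X * fps_deriv (fac c n) = - (fps_const (of_nat n * c) * fps_X ^ n)"
    unfolding fac_def using X
    by (simp add: fps_deriv_power fps_of_nat algebra_simps fps_const_mult[symmetric] del: fps_const_mult)
  also have "\<dots> = Lf c n * fac c n"
    unfolding Lf_def using fac_Einv[OF n] by (simp add: algebra_simps)
  finally show ?thesis by (simp add: Ld_def)
qed

lemma Ld_Einv:
  assumes n: "n \<ge> 1"
  shows "Ld (Einv c n) (- Lf c n)"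
proof -
  have h1: "fac c n * Einv c n = 1" by (rule fac_Einv[OF n])
  have h2: "fps_X * fps_deriv (fac c n) = Lf c n * fac c n" using Ld_fac[OF n] by (simp add: Ld_def)
  have "fps_deriv (fac c n * Einv c n) = 0" using h1 by simp
  then have h3: "fac c n * fps_deriv (Einv c n) + fps_deriv (fac c n) * Einv c n = 0" by simp
  have "fps_X * fps_deriv (Einv c n) = - Lf c n * Einv c n"
    using h1 h2 h3 by algebra
  then show ?thesis by (simp add: Ld_def)
qed

lemma Ld_ipow:
  assumes n: "n \<ge> 1"
  shows "Ld (fps_ipow (fac c n) a) (of_int a * Lf c n)"
proof (cases "0 \<le> a")
  case True
  then show ?thesis using Ld_power[OF Ld_fac[OF n], where p="nat a"] by (simp add: fps_ipow_def)
next
  case False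
  then show ?thesis using Ld_power[OF Ld_Einv[OF n], where p="nat (- a)"]
    by (simp add: fps_ipow_def inverse_fac[OF n])
qed

lemma Lf_nth:
  assumes n: "n \<ge> 1" and N: "N \<ge> 1"
  shows "Lf c n $ N = (if n dvd N then - (of_nat n * c ^ (N div n)) else 0)"
proof -
  have "Lf c n $ N = - (of_nat n * c * (if N < n then 0 else Einv c n $ (N - n)))"
    unfolding Lf_def by (simp add: mult.assoc fps_X_power_mult_nth)
  also have "\<dots> = (if n dvd N then - (of_nat n * c ^ (N div n)) else 0)"
  proof (cases "n dvd N")
    case True
    then obtain q where q: "N = n * q" by auto
    then have "q \<ge> 1" using N by (cases q) auto
    then have "(N - n) div n = q - 1" "N div n = q" using q n by (simp_all add: diff_mult_distrib2[symmetric, of n q 1, simplified])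
    moreover have "\<not> N < n" using q \<open>q \<ge> 1\<close> by simp
    moreover have "n dvd N - n" using True by (simp add: dvd_diff_nat)
    ultimately show ?thesis using True \<open>q \<ge> 1\<close> by (simp add: Einv_def power_eq_if)
  next
    case False
    then have "\<not> n dvd (N - n) \<or> N < n" by (metis dvd_minus_self linorder_not_less)
    then show ?thesis using False by (auto simp: Einv_def)
  qed
  finally show ?thesis .
qed



definition cm :: "nat \<Rightarrow> nat \<Rightarrow> rat" where "cm m n = of_int ((-1) ^ (m * n))"

lemma fac_Defs: "(1 - of_int ((-1) ^ (m * n)) * fps_X ^ n :: rat fps) = fac (cm m n) n"
  by (simp only: fac_def cm_def fps_of_int)

definition Qp :: "nat \<Rightarrow> (nat \<Rightarrow> int) \<Rightarrow> nat \<Rightarrow> rat fps" where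
  "Qp m \<alpha> M = (\<Prod>n\<in>{1..M}. fps_ipow (fac (cm m n) n) (\<alpha> n))"

lemma herd_Qp: "herd_factorization m P \<alpha> \<longleftrightarrow> (\<forall>N. P $ N = Qp m \<alpha> N $ N)"
  by (simp only: herd_factorization_def Qp_def fac_Defs)

lemma Qp_lowz0: "lowz 0 (Qp m \<alpha> M)"
  unfolding Qp_def by (rule lowz_prod) (auto intro: lowz_mono[OF conjunct1[OF lowz_ipow]])

lemma Qp_prefix:
  assumes "j \<le> M" and that: "i \<le> j"
  shows "Qp m \<alpha> M $ i = Qp m \<alpha> j $ i"
proof -
  have "{1..M} = {1..j} \<union> {Suc j..M}" using assms by auto
  then have "Qp m \<alpha> M = Qp m \<alpha> j * (\<Prod>n\<in>{Suc j..M}. fps_ipow (fac (cm m n) n) (\<alpha> n))"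
    unfolding Qp_def by (simp add: prod.union_disjoint[symmetric] ivl_disj_int)
  moreover have "lowz j (\<Prod>n\<in>{Suc j..M}. fps_ipow (fac (cm m n) n) (\<alpha> n))"
    by (rule lowz_prod) (auto intro: lowz_mono[OF conjunct1[OF lowz_ipow]])
  ultimately show ?thesis using mult_lowz_right that by simp
qed

lemma Qp_Suc: "Qp m \<alpha> (Suc M) = Qp m \<alpha> M * fps_ipow (fac (cm m (Suc M)) (Suc M)) (\<alpha> (Suc M))"
  unfolding Qp_def by (simp add: atLeastAtMostSuc_conv mult.commute)

lemma Qp_Ld: "Ld (Qp m \<alpha> M) (\<Sum>n\<in>{1..M}. of_int (\<alpha> n) * Lf (cm m n) n)"
  unfolding Qp_def by (rule Ld_prod) (auto intro: Ld_ipow)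

lemma Xd_nth: "(fps_X * fps_deriv f) $ N = of_nat N * (f $ N :: rat)"
  by (cases N) (simp_all add: fps_X_mult_nth)

lemma mult_nth_split: "(A * B) $ j = A $ j * B $ 0 + (\<Sum>i=0..<j. A $ i * B $ (j - i))"
  unfolding fps_mult_nth by (simp add: atLeastLessThanSuc_atLeastAtMost[symmetric] add.commute)

lemma coef_agree:
  fixes G H P Q :: "rat fps"
  assumes GP: "G * P = fps_X * fps_deriv P" and HQ: "H * Q = fps_X * fps_deriv Q"
    and P0: "P $ 0 = 1" and Q0: "Q $ 0 = 1" and QP: "\<And>j. j \<le> M \<Longrightarrow> Q $ j = P $ j"
  shows "j \<le> M \<Longrightarrow> G $ j = H $ j"
proof (induction j rule: less_induct)
  case (less j)
  have "(G * P) $ j = (H * Q) $ j"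
    unfolding GP HQ Xd_nth using QP[OF less.prems] by simp
  moreover have "(\<Sum>i=0..<j. G $ i * P $ (j - i)) = (\<Sum>i=0..<j. H $ i * Q $ (j - i))"
    by (rule sum.cong) (use less QP in auto)
  ultimately show ?case unfolding mult_nth_split using P0 Q0 by simp
qed

lemma cm_pow: "n dvd N \<Longrightarrow> n > 0 \<Longrightarrow> cm m n ^ (N div n) = (-1) ^ (m * N)"
  by (auto simp: cm_def power_mult[symmetric] mult.assoc elim!: dvdE)

lemma sign_aux:
  fixes s S T :: rat
  assumes "s * s = 1" "- (s * S) = T"
  shows "S = - (s * T)"
proof -
  have "S = (s * s) * S" using assms by simp
  also have "\<dots> = - (s * T)" using assms(2) by (simp add: algebra_simps flip: assms(2))
  finally show ?thesis .
qed

lemma divisor_sum: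
  fixes m :: nat and P :: "rat fps" and \<alpha> :: "nat \<Rightarrow> int"
  assumes m: "m \<ge> 2" and P0: "P $ 0 = 1" and Peq: "P = 1 + fps_X * P ^ ((m - 1)^2)"
    and herd: "herd_factorization m P \<alpha>" and M: "M \<ge> 1"
  shows "(\<Sum>e | e dvd M. of_nat e * of_int (\<alpha> e)) = - ((-1::rat) ^ (m * M) * of_nat (((m-1)^2 * M) choose M) / of_nat ((m-1)^2))"
proof -
  define k where "k = (m - 1)^2"
  have k: "k \<ge> 1" using m by (simp add: k_def)
  interpret lag k P using k P0 Peq by unfold_locales (simp_all add: k_def)
  define Q where "Q = Qp m \<alpha> M"
  have hP: "\<And>N. P $ N = Qp m \<alpha> N $ N" using herd by (simp add: herd_Qp)
  have QP: "Q $ j = P $ j" if "j \<le> M" for j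
    using Qp_prefix[OF that order_refl] hP by (simp add: Q_def)
  have Q0: "Q $ 0 = 1" using Qp_lowz0 by (simp add: Q_def lowz_def)
  define H where "H = (\<Sum>n\<in>{1..M}. of_int (\<alpha> n) * Lf (cm m n) n)"
  have HQ: "H * Q = fps_X * fps_deriv Q" using Qp_Ld[of m \<alpha> M] by (simp add: Ld_def H_def Q_def)
  have GH: "G $ M = H $ M"
    by (rule coef_agree[OF G_P HQ P0 Q0 QP]) auto
  have "H $ M = (\<Sum>n\<in>{1..M}. if n dvd M then - ((-1) ^ (m * M) * (of_nat n * of_int (\<alpha> n))) else 0)"
    unfolding H_def fps_sum_nth
  proof (rule sum.cong)
    fix n assume n: "n \<in> {1..M}"
    show "(of_int (\<alpha> n) * Lf (cm m n) n) $ M = (if n dvd M then - ((-1) ^ (m * M) * (of_nat n * of_int (\<alpha> n))) else 0)"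
      using n M by (simp add: Lf_nth cm_pow fps_of_int[symmetric])
  qed simp
  also have "\<dots> = - ((-1) ^ (m * M) * (\<Sum>n\<in>{n \<in> {1..M}. n dvd M}. of_nat n * of_int (\<alpha> n)))"
    by (simp add: sum.inter_filter[symmetric] sum_negf sum_distrib_left)
  also have "{n \<in> {1..M}. n dvd M} = {e. e dvd M}"
    using M by (auto dest: dvd_imp_le intro: Nat.gr0I)
  finally have "H $ M = - ((-1) ^ (m * M) * (\<Sum>e | e dvd M. of_nat e * of_int (\<alpha> e)))" .
  moreover have "G $ M = of_nat ((k * M) choose M) / of_nat k" by (rule G_nth[OF M])
  ultimately have "- ((-1) ^ (m * M) * (\<Sum>e | e dvd M. of_nat e * of_int (\<alpha> e))) = of_nat ((k * M) choose M) / (of_nat k :: rat)"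
    using GH by simp
  from sign_aux[OF _ this] show ?thesis unfolding k_def[symmetric]
    by (simp add: power_mult_distrib[symmetric] flip: power_add)
qed

lemma formula:
  fixes m :: nat and P :: "rat fps" and \<alpha> :: "nat \<Rightarrow> int"
  assumes m: "m \<ge> 2" and P0: "P $ 0 = 1" and Peq: "P = 1 + fps_X * P ^ ((m - 1)^2)"
    and herd: "herd_factorization m P \<alpha>" and n: "n \<ge> 1"
  shows "of_nat m * of_int (\<alpha> n) / of_nat n =
               (of_nat m / (of_nat ((m - 1)^2) * of_nat n ^ 2)) *
               (\<Sum>d | d dvd n. of_int ((-1) ^ (m * d + 1) * mobius (n div d))
                                  * of_nat (((m - 1)^2 * d) choose d) :: rat)"
proof -
  define k where "k = (m - 1)^2"
  have k: "k \<ge> 1" using m by (simp add: k_def)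
  define F where "F d = (of_int ((-1) ^ (m * d + 1)) * of_nat ((k * d) choose d) / of_nat k :: rat)" for d
  have hF: "(\<Sum>e | e dvd N. of_nat e * of_int (\<alpha> e)) = F N" if "N \<ge> 1" for N
    using divisor_sum[OF m P0 Peq herd that] by (simp add: F_def k_def)
  have inv: "of_nat n * of_int (\<alpha> n) = (\<Sum>d | d dvd n. of_int (mobius (n div d)) * F d)"
    by (rule mobius_inversion[where g = "\<lambda>e. of_nat e * of_int (\<alpha> e)", OF hF n])
  have "(\<Sum>d | d dvd n. of_int ((-1) ^ (m * d + 1) * mobius (n div d)) * of_nat ((k * d) choose d) :: rat)
      = of_nat k * (\<Sum>d | d dvd n. of_int (mobius (n div d)) * F d)"
    unfolding sum_distrib_left F_def using k by (intro sum.cong) auto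
  also have "\<dots> = of_nat k * (of_nat n * of_int (\<alpha> n))" using inv by simp
  finally have S: "(\<Sum>d | d dvd n. of_int ((-1) ^ (m * d + 1) * mobius (n div d)) * of_nat ((k * d) choose d) :: rat)
      = of_nat k * (of_nat n * of_int (\<alpha> n))" .
  show ?thesis unfolding k_def[symmetric] S using k n by (simp add: field_simps power2_eq_square)
qed

definition intto :: "nat \<Rightarrow> rat fps \<Rightarrow> bool" where
  "intto M f \<longleftrightarrow> (\<forall>i\<le>M. f $ i \<in> \<int>)"

lemma intto_mult: "intto M A \<Longrightarrow> intto M B \<Longrightarrow> intto M (A * B)"
  unfolding intto_def fps_mult_nth by (auto intro!: Ints_sum Ints_mult)

lemma intto_one: "intto M 1"
  by (auto simp: intto_def)

lemma intto_power: "intto M A \<Longrightarrow> intto M (A ^ p)"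
  by (induction p) (auto intro: intto_mult intto_one)

lemma intto_prod: "finite S \<Longrightarrow> (\<And>n. n \<in> S \<Longrightarrow> intto M (F n)) \<Longrightarrow> intto M (\<Prod>n\<in>S. F n)"
  by (induction S rule: finite_induct) (auto intro: intto_mult intto_one)

lemma intto_fac: "c \<in> \<int> \<Longrightarrow> intto M (fac c n)"
  by (auto simp: intto_def fac_def)

lemma intto_Einv: "c \<in> \<int> \<Longrightarrow> intto M (Einv c n)"
  by (auto simp: intto_def Einv_def)

lemma intto_ipow: "c \<in> \<int> \<Longrightarrow> n \<ge> 1 \<Longrightarrow> intto M (fps_ipow (fac c n) a)"
  by (auto simp: fps_ipow_def inverse_fac intro!: intto_power intto_fac intto_Einv)

lemma cm_Ints: "cm m n \<in> \<int>" by (simp add: cm_def)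

lemma cm_sq: "cm m n * cm m n = 1"
  by (simp add: cm_def flip: power_add)

lemma Qp_intto: "intto M (Qp m \<alpha> K)"
  unfolding Qp_def by (rule intto_prod) (auto intro: intto_ipow cm_Ints)

lemma P_intto:
  fixes P :: "rat fps"
  assumes P0: "P $ 0 = 1" and Peq: "P = 1 + fps_X * P ^ k"
  shows "intto M P"
proof (induction M)
  case 0 then show ?case using P0 by (simp add: intto_def)
next
  case (Suc M)
  have "P $ Suc M = (P ^ k) $ M"
    by (subst Peq) (simp add: fps_X_mult_nth)
  moreover have "(P ^ k) $ M \<in> \<int>" using intto_power[OF Suc.IH, of k] by (simp add: intto_def)
  ultimately show ?case using Suc.IH by (auto simp: intto_def le_Suc_eq)
qed

function alph :: "nat \<Rightarrow> rat fps \<Rightarrow> nat \<Rightarrow> int" where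
  "alph m P N = (if N = 0 then 0 else
     \<lfloor>cm m N * ((\<Prod>n\<in>{1..<N}. fps_ipow (fac (cm m n) n) (alph m P n)) $ N - P $ N)\<rfloor>)"
  by auto
termination by (relation "measure (\<lambda>(m, P, N). N)") auto

declare alph.simps[simp del]

lemma alph_Suc: "alph m P (Suc M) = \<lfloor>cm m (Suc M) * (Qp m (alph m P) M $ Suc M - P $ Suc M)\<rfloor>"
proof -
  have "{1..<Suc M} = {1..M}" by auto
  then show ?thesis unfolding Qp_def by (subst alph.simps[of m P "Suc M"]) simp
qed

lemma alph_works:
  fixes P :: "rat fps"
  assumes P0: "P $ 0 = 1" and Pint: "\<And>M. intto M P"
  shows "\<forall>j\<le>M. Qp m (alph m P) M $ j = P $ j"
proof (induction M)
  case 0 then show ?case using P0 by (simp add: Qp_def)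
next
  case (Suc M)
  define c where "c = cm m (Suc M)"
  define a where "a = alph m P (Suc M)"
  define F where "F = fps_ipow (fac c (Suc M)) a"
  define x where "x = Qp m (alph m P) M $ Suc M"
  have QS: "Qp m (alph m P) (Suc M) = Qp m (alph m P) M * F"
    unfolding Qp_Suc F_def c_def a_def ..
  have lF: "lowz M F" "F $ Suc M = - of_int a * c"
    using lowz_ipow[of "Suc M" c a] by (simp_all add: F_def)
  have xi: "x \<in> \<int>" using Qp_intto[of "Suc M" m "alph m P" M] by (simp add: intto_def x_def)
  have pi: "P $ Suc M \<in> \<int>" using Pint[of "Suc M"] by (simp add: intto_def)
  have "c * (x - P $ Suc M) \<in> \<int>" using xi pi cm_Ints by (simp add: c_def)
  then have aeq: "of_int a = c * (x - P $ Suc M)"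
    unfolding a_def alph_Suc c_def[symmetric] x_def[symmetric] by (auto elim!: Ints_cases)
  have Q0: "Qp m (alph m P) M $ 0 = 1" using Qp_lowz0 by (simp add: lowz_def)
  show ?case
  proof (intro allI impI)
    fix j assume j: "j \<le> Suc M"
    show "Qp m (alph m P) (Suc M) $ j = P $ j"
    proof (cases "j = Suc M")
      case True
      have "Qp m (alph m P) (Suc M) $ j = x - of_int a * c"
        unfolding QS True mult_lowz_Suc[OF lF(1)] lF(2) Q0 x_def by simp
      also have "\<dots> = x - (c * c) * (x - P $ Suc M)" unfolding aeq by (simp add: algebra_simps)
      also have "\<dots> = P $ j" using cm_sq[of m "Suc M"] True by (simp add: c_def)
      finally show ?thesis .
    next
      case False
      then have "j \<le> M" using j by simp
      then show ?thesis unfolding QS mult_lowz_right[OF lF(1) \<open>j \<le> M\<close>] using Suc.IH by simp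
    qed
  qed
qed

theorem mainTheorem1:
  fixes m :: nat and P :: "rat fps"
  assumes "m \<ge> 2"
    and "fps_nth P 0 = 1"
    and "P = 1 + fps_X * P ^ ((m - 1)^2)"
  shows "(\<exists>\<alpha> :: nat \<Rightarrow> int. herd_factorization m P \<alpha>) \<and>
         (\<forall>\<alpha> :: nat \<Rightarrow> int. herd_factorization m P \<alpha> \<longrightarrow>
            (\<forall>n \<ge> 1. of_nat m * of_int (\<alpha> n) / of_nat n =
               (of_nat m / (of_nat ((m - 1)^2) * of_nat n ^ 2)) *
               (\<Sum>d | d dvd n. of_int ((-1) ^ (m * d + 1) * mobius (n div d))
                                  * of_nat (((m - 1)^2 * d) choose d) :: rat)))"
proof
  have Pint: "\<And>M. intto M P" using P_intto[OF assms(2) assms(3)] .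
  have "herd_factorization m P (alph m P)"
    unfolding herd_Qp using alph_works[OF assms(2) Pint] by simp
  then show "\<exists>\<alpha> :: nat \<Rightarrow> int. herd_factorization m P \<alpha>" by blast
next
  show "\<forall>\<alpha> :: nat \<Rightarrow> int. herd_factorization m P \<alpha> \<longrightarrow>
            (\<forall>n \<ge> 1. of_nat m * of_int (\<alpha> n) / of_nat n =
               (of_nat m / (of_nat ((m - 1)^2) * of_nat n ^ 2)) *
               (\<Sum>d | d dvd n. of_int ((-1) ^ (m * d + 1) * mobius (n div d))
                                  * of_nat (((m - 1)^2 * d) choose d) :: rat))"
    using formula[OF assms] by blast
qed


end
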